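(* For every ordinal $\alpha$ and every closed $\mathcal L$-term $t$: $(\mathbb N,T^*_\alpha,P^*_\alpha)\not\models_{SK}\mathrm P\ulcorner\mathrm Pt\urcorner\vee\mathrm P\ulcorner\neg\mathrm Pt\urcorner$. In particular, $P_0^{*-}\cap P_\infty^{*+}=\emptyset$, where $(T^*_\infty,P^*_\infty)$ is the stage at which the modified sequence stabilizes.
   Context: Language. Let $\mathcal L_{\mathbb N}$ be the language of first-order Peano arithmetic and $\mathcal L=\mathcal L_{\mathbb N}\cup\{\mathrm T,\mathrm P\}$ with unary predicates $\mathrm T,\mathrm P$. $\mathcal L$-formulas are in Tait style: literals are $s=t$, $s\neq t$, $\mathrm Tt$, $\neg\mathrm Tt$, $\mathrm Pt$, $\neg\mathrm Pt$; formulas are built from literals by $\wedge,\vee,\forall,\exists$; negation of an arbitrary formula is defined by De Morgan dualities with $\neg\neg\varphi:=\varphi$. A standard Gödel numbering is fixed; $\#e$ is the code of $e$, $\ulcorner e\urcorner$ the numeral of $\#e$, $\mathrm{val}(t)$ the value of a closed term $t$, $\dot\neg$ the primitive recursive function with $\dot\neg(\#\varphi)=\#\neg\varphi$; $\mathrm T\varphi,\mathrm P\varphi$ abbreviate $\mathrm T\ulcorner\varphi\urcorner,\mathrm P\ulcorner\varphi\urcorner$. Semantics. A partial model is $(\mathbb N,T,P)$ with $\mathbb N$ the standard model and $T=(T^+,T^-)$, $P=(P^+,P^-)$ pairs of subsets of $\omega$. Strong Kleene satisfaction $\models_{SK}$: arithmetic literals evaluated in $\mathbb N$; $\mathrm Tt$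 satisfied iff $\mathrm{val}(t)\in T^+$, $\neg\mathrm Tt$ iff $\mathrm{val}(t)\in T^-$, likewise for $\mathrm P$ with $P^\pm$; conjunction iff both, disjunction iff at least one, $\forall x\varphi(x)$ iff all numeral instances, $\exists x\varphi(x)$ iff some numeral instance. Base paradoxicality. $\mathrm{PA}[\mathrm{SK}]$ is the two-sided sequent calculus for Strong Kleene logic with identity in $\mathcal L$ (initial sequents $\varphi\Rightarrow\varphi$, cut, weakening, the rule from $\Gamma\Rightarrow\Delta,\varphi$ infer $\neg\varphi,\Gamma\Rightarrow\Delta$, usual rules for $\wedge,\vee,\forall,\exists$, reflexivity $\Rightarrow t=t$, replacement from $\Gamma\Rightarrow\Delta,\varphi(t)$ infer $\Gamma\Rightarrow\Delta,s\neq t,\varphi(s)$) plus the initial sequents of Peano arithmetic and the induction rule for all $\mathcal L$-formulas. A sentence $\varphi$ is base paradoxical iff $\mathrm{PA}[\mathrm{SK}]$ derives $\varphi\Leftrightarrow\neg\mathrm T\varphi$ and $\neg\varphi\Leftrightarrow\mathrm T\varphi$ ($\Leftrightarrow$ meaning both sequents). $B(x)$ is an $\mathcal L_{\mathbb N}$-formula defining in $\mathbb N$ the set of codes of base paradoxical sentences, and $\Pi(x):=B(x)\vee B(\dot\neg x)$. Paradoxicality clauses. Let $\mathscr P(x)$ be the $\mathcal L$-formula which is the disjunction of: (1) $x$ codes a sentence and $\Pi(x)$; (2) $x$ codes a sentence $\mathrm Tt$ ($t$ a closed term) and $\mathrm P(\mathrm{val}(t))$; (3) $x$ codes a sentence $\neg\mathrm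 Tt$ and $\mathrm P(\mathrm{val}(t))$; (4) $x$ codes a sentence $\psi\wedge\theta$ and $(\mathrm P\psi\wedge\mathrm P\theta)\vee(\mathrm T\psi\wedge\mathrm P\theta)\vee(\mathrm T\theta\wedge\mathrm P\psi)$; (5) $x$ codes a sentence $\psi\vee\theta$ and $(\mathrm P\psi\wedge\mathrm P\theta)\vee(\neg\mathrm T\psi\wedge\mathrm P\theta)\vee(\neg\mathrm T\theta\wedge\mathrm P\psi)$; (6) $x$ codes a sentence $\forall v\psi$ and $\exists y\,\mathrm P\psi(\dot y)\wedge\forall y(\mathrm P\psi(\dot y)\vee\mathrm T\psi(\dot y))$; (7) $x$ codes a sentence $\exists v\psi$ and $\exists y\,\mathrm P\psi(\dot y)\wedge\forall y(\mathrm P\psi(\dot y)\vee\neg\mathrm T\psi(\dot y))$; here $\psi(\dot y)$ is the code of the result of substituting the numeral of $y$ for $v$. Write $\mathscr P(\varphi)$ for $\mathscr P(\ulcorner\varphi\urcorner)$. Modified sequence. Let $P_0^{*-}$ be the set of codes of the sentences $\mathrm P\ulcorner\varphi\urcorner$ for $\varphi$ an $\mathcal L$-formula. Define $\Gamma^*_{\mathscr{TP}}(T,P)=\big((\{\#\varphi:(\mathbb N,T,P)\models_{SK}\varphi\},\{\#\varphi:(\mathbb N,T,P)\models_{SK}\neg\varphi\}),(\{\#\varphi:(\mathbb N,T,P)\models_{SK}\mathscr P(\varphi)\},\{\#\varphi:(\mathbb N,T,P)\models_{SK}\varphi\vee\neg\varphi\}\cup P_0^{*-})\big)$, $\varphi$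 ranging over $\mathcal L$-sentences. Define $(T^*_0,P^*_0)=((\emptyset,\emptyset),(\emptyset,P_0^{*-}))$, $(T^*_{\xi+1},P^*_{\xi+1})=\Gamma^*_{\mathscr{TP}}(T^*_\xi,P^*_\xi)$, and $(T^*_\lambda,P^*_\lambda)=\bigcup_{\xi<\lambda}(T^*_\xi,P^*_\xi)$ (componentwise union) for limit $\lambda$; this monotone sequence reaches a least fixed point $(T^*_\infty,P^*_\infty)$ with $P^*_\infty=(P_\infty^{*+},P_\infty^{*-})$. *)

theory Defs
  imports Main "HOL-Library.Nat_Bijection" "HOL-Library.Product_Order"
begin

datatype tm = Var nat | Zero | Sc tm | Plus tm tm | Times tm tm

text \<open>Tait-style formulas: literals s=t, s~=t, Tt, ~Tt, Pt, ~Pt; connectives and, or, all, ex.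
  The quantifiers bind de Bruijn index 0.\<close>
datatype fm = Eq tm tm | Neq tm tm | Tr tm | NTr tm | Pr tm | NPr tm
  | And fm fm | Or fm fm | All fm | Ex fm

primrec neg :: "fm \<Rightarrow> fm" where
  "neg (Eq s t) = Neq s t"
| "neg (Neq s t) = Eq s t"
| "neg (Tr t) = NTr t"
| "neg (NTr t) = Tr t"
| "neg (Pr t) = NPr t"
| "neg (NPr t) = Pr t"
| "neg (And a b) = Or (neg a) (neg b)"
| "neg (Or a b) = And (neg a) (neg b)"
| "neg (All a) = Ex (neg a)"
| "neg (Ex a) = All (neg a)"

primrec substt :: "(nat \<Rightarrow> tm) \<Rightarrow> tm \<Rightarrow> tm" where
  "substt \<sigma> (Var n) = \<sigma> n"
| "substt \<sigma> Zero = Zero"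
| "substt \<sigma> (Sc t) = Sc (substt \<sigma> t)"
| "substt \<sigma> (Plus s t) = Plus (substt \<sigma> s) (substt \<sigma> t)"
| "substt \<sigma> (Times s t) = Times (substt \<sigma> s) (substt \<sigma> t)"

definition liftt :: "tm \<Rightarrow> tm" where
  "liftt t = substt (\<lambda>n. Var (Suc n)) t"

definition up :: "(nat \<Rightarrow> tm) \<Rightarrow> nat \<Rightarrow> tm" where
  "up \<sigma> n = (case n of 0 \<Rightarrow> Var 0 | Suc m \<Rightarrow> liftt (\<sigma> m))"

primrec substf :: "(nat \<Rightarrow> tm) \<Rightarrow> fm \<Rightarrow> fm" where
  "substf \<sigma> (Eq s t) = Eq (substt \<sigma> s) (substt \<sigma> t)"
| "substf \<sigma> (Neq s t) = Neq (substt \<sigma> s) (substt \<sigma> t)"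
| "substf \<sigma> (Tr t) = Tr (substt \<sigma> t)"
| "substf \<sigma> (NTr t) = NTr (substt \<sigma> t)"
| "substf \<sigma> (Pr t) = Pr (substt \<sigma> t)"
| "substf \<sigma> (NPr t) = NPr (substt \<sigma> t)"
| "substf \<sigma> (And a b) = And (substf \<sigma> a) (substf \<sigma> b)"
| "substf \<sigma> (Or a b) = Or (substf \<sigma> a) (substf \<sigma> b)"
| "substf \<sigma> (All a) = All (substf (up \<sigma>) a)"
| "substf \<sigma> (Ex a) = Ex (substf (up \<sigma>) a)"

definition liftf :: "fm \<Rightarrow> fm" where
  "liftf \<phi> = substf (\<lambda>n. Var (Suc n)) \<phi>"

definition inst :: "fm \<Rightarrow> tm \<Rightarrow> fm" where
  "inst \<phi> t = substf (\<lambda>n. case n of 0 \<Rightarrow> t | Suc m \<Rightarrow> Var m) \<phi>"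

definition succ_inst :: "fm \<Rightarrow> fm" where
  "succ_inst \<phi> = substf (\<lambda>n. if n = 0 then Sc (Var 0) else Var n) \<phi>"

primrec closedt :: "nat \<Rightarrow> tm \<Rightarrow> bool" where
  "closedt k (Var n) = (n < k)"
| "closedt k Zero = True"
| "closedt k (Sc t) = closedt k t"
| "closedt k (Plus s t) = (closedt k s \<and> closedt k t)"
| "closedt k (Times s t) = (closedt k s \<and> closedt k t)"

primrec closedf :: "nat \<Rightarrow> fm \<Rightarrow> bool" where
  "closedf k (Eq s t) = (closedt k s \<and> closedt k t)"
| "closedf k (Neq s t) = (closedt k s \<and> closedt k t)"
| "closedf k (Tr t) = closedt k t"
| "closedf k (NTr t) = closedt k t"
| "closedf k (Pr t) = closedt k t"
| "closedf k (NPr t) = closedt k t"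
| "closedf k (And a b) = (closedf k a \<and> closedf k b)"
| "closedf k (Or a b) = (closedf k a \<and> closedf k b)"
| "closedf k (All a) = closedf (Suc k) a"
| "closedf k (Ex a) = closedf (Suc k) a"

definition closed_term :: "tm \<Rightarrow> bool" where
  "closed_term t = closedt 0 t"

definition sentence :: "fm \<Rightarrow> bool" where
  "sentence \<phi> = closedf 0 \<phi>"

primrec evalt :: "(nat \<Rightarrow> nat) \<Rightarrow> tm \<Rightarrow> nat" where
  "evalt e (Var n) = e n"
| "evalt e Zero = 0"
| "evalt e (Sc t) = Suc (evalt e t)"
| "evalt e (Plus s t) = evalt e s + evalt e t"
| "evalt e (Times s t) = evalt e s * evalt e t"

text \<open>val(t) for a closed term t (the environment is irrelevant for closed terms).\<close>
definition val :: "tm \<Rightarrow> nat" where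
  "val t = evalt (\<lambda>_. 0) t"

primrec num :: "nat \<Rightarrow> tm" where
  "num 0 = Zero"
| "num (Suc n) = Sc (num n)"

primrec code_tm :: "tm \<Rightarrow> nat" where
  "code_tm (Var n) = prod_encode (0, n)"
| "code_tm Zero = prod_encode (1, 0)"
| "code_tm (Sc t) = prod_encode (2, code_tm t)"
| "code_tm (Plus s t) = prod_encode (3, prod_encode (code_tm s, code_tm t))"
| "code_tm (Times s t) = prod_encode (4, prod_encode (code_tm s, code_tm t))"

primrec code :: "fm \<Rightarrow> nat" where
  "code (Eq s t) = prod_encode (0, prod_encode (code_tm s, code_tm t))"
| "code (Neq s t) = prod_encode (1, prod_encode (code_tm s, code_tm t))"
| "code (Tr t) = prod_encode (2, code_tm t)"
| "code (NTr t) = prod_encode (3, code_tm t)"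
| "code (Pr t) = prod_encode (4, code_tm t)"
| "code (NPr t) = prod_encode (5, code_tm t)"
| "code (And a b) = prod_encode (6, prod_encode (code a, code b))"
| "code (Or a b) = prod_encode (7, prod_encode (code a, code b))"
| "code (All a) = prod_encode (8, code a)"
| "code (Ex a) = prod_encode (9, code a)"

definition gn :: "fm \<Rightarrow> tm" where
  "gn \<phi> = num (code \<phi>)"

text \<open>Sequents Gamma => Delta with finite sets of formulas.  Eigenvariable conditions are
  handled de Bruijn style by lifting the side formulas.\<close>
inductive pask :: "fm set \<Rightarrow> fm set \<Rightarrow> bool" where
  init: "pask {\<phi>} {\<phi>}"
| weak: "pask \<Gamma> \<Delta> \<Longrightarrow> \<Gamma> \<subseteq> \<Gamma>' \<Longrightarrow> \<Delta> \<subseteq> \<Delta>' \<Longrightarrow> finite \<Gamma>' \<Longrightarrow> finite \<Delta>' \<Longrightarrow> pask \<Gamma>' \<Delta>'"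
| cut: "pask \<Gamma> (insert \<phi> \<Delta>) \<Longrightarrow> pask (insert \<phi> \<Gamma>) \<Delta> \<Longrightarrow> pask \<Gamma> \<Delta>"
| negL: "pask \<Gamma> (insert \<phi> \<Delta>) \<Longrightarrow> pask (insert (neg \<phi>) \<Gamma>) \<Delta>"
| andL: "pask (insert \<phi> (insert \<psi> \<Gamma>)) \<Delta> \<Longrightarrow> pask (insert (And \<phi> \<psi>) \<Gamma>) \<Delta>"
| andR: "pask \<Gamma> (insert \<phi> \<Delta>) \<Longrightarrow> pask \<Gamma> (insert \<psi> \<Delta>) \<Longrightarrow> pask \<Gamma> (insert (And \<phi> \<psi>) \<Delta>)"
| orL: "pask (insert \<phi> \<Gamma>) \<Delta> \<Longrightarrow> pask (insert \<psi> \<Gamma>) \<Delta> \<Longrightarrow> pask (insert (Or \<phi> \<psi>) \<Gamma>) \<Delta>"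
| orR: "pask \<Gamma> (insert \<phi> (insert \<psi> \<Delta>)) \<Longrightarrow> pask \<Gamma> (insert (Or \<phi> \<psi>) \<Delta>)"
| allL: "pask (insert (inst \<phi> t) \<Gamma>) \<Delta> \<Longrightarrow> pask (insert (All \<phi>) \<Gamma>) \<Delta>"
| allR: "pask (liftf ` \<Gamma>) (insert \<phi> (liftf ` \<Delta>)) \<Longrightarrow> pask \<Gamma> (insert (All \<phi>) \<Delta>)"
| exL: "pask (insert \<phi> (liftf ` \<Gamma>)) (liftf ` \<Delta>) \<Longrightarrow> pask (insert (Ex \<phi>) \<Gamma>) \<Delta>"
| exR: "pask \<Gamma> (insert (inst \<phi> t) \<Delta>) \<Longrightarrow> pask \<Gamma> (insert (Ex \<phi>) \<Delta>)"
| refl: "pask {} {Eq t t}"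
| repl: "pask \<Gamma> (insert (inst \<phi> t) \<Delta>) \<Longrightarrow> pask \<Gamma> (insert (Neq s t) (insert (inst \<phi> s) \<Delta>))"
| pa1: "pask {} {Neq (Sc s) Zero}"
| pa2: "pask {Eq (Sc s) (Sc t)} {Eq s t}"
| pa3: "pask {} {Eq (Plus s Zero) s}"
| pa4: "pask {} {Eq (Plus s (Sc t)) (Sc (Plus s t))}"
| pa5: "pask {} {Eq (Times s Zero) Zero}"
| pa6: "pask {} {Eq (Times s (Sc t)) (Plus (Times s t) s)}"
| ind: "pask (insert \<phi> (liftf ` \<Gamma>)) (insert (succ_inst \<phi>) (liftf ` \<Delta>)) \<Longrightarrow>
        pask (insert (inst \<phi> Zero) \<Gamma>) (insert (inst \<phi> t) \<Delta>)"

definition base_paradoxical :: "fm \<Rightarrow> bool" where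
  "base_paradoxical \<phi> \<longleftrightarrow> sentence \<phi> \<and>
     pask {\<phi>} {neg (Tr (gn \<phi>))} \<and> pask {neg (Tr (gn \<phi>))} {\<phi>} \<and>
     pask {neg \<phi>} {Tr (gn \<phi>)} \<and> pask {Tr (gn \<phi>)} {neg \<phi>}"

definition Pi_par :: "fm \<Rightarrow> bool" where
  "Pi_par \<phi> \<longleftrightarrow> base_paradoxical \<phi> \<or> base_paradoxical (neg \<phi>)"

text \<open>A partial model is ((T+, T-), (P+, P-)).\<close>
type_synonym pmodel = "(nat set \<times> nat set) \<times> (nat set \<times> nat set)"

definition Tp :: "pmodel \<Rightarrow> nat set" where "Tp M = fst (fst M)"
definition Tn :: "pmodel \<Rightarrow> nat set" where "Tn M = snd (fst M)"
definition Pp :: "pmodel \<Rightarrow> nat set" where "Pp M = fst (snd M)"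
definition Pn :: "pmodel \<Rightarrow> nat set" where "Pn M = snd (snd M)"

primrec fsize :: "fm \<Rightarrow> nat" where
  "fsize (Eq s t) = 0"
| "fsize (Neq s t) = 0"
| "fsize (Tr t) = 0"
| "fsize (NTr t) = 0"
| "fsize (Pr t) = 0"
| "fsize (NPr t) = 0"
| "fsize (And a b) = Suc (fsize a + fsize b)"
| "fsize (Or a b) = Suc (fsize a + fsize b)"
| "fsize (All a) = Suc (fsize a)"
| "fsize (Ex a) = Suc (fsize a)"

lemma fsize_substf [simp]: "fsize (substf \<sigma> \<phi>) = fsize \<phi>"
  by (induction \<phi> arbitrary: \<sigma>) auto

lemma fsize_inst [simp]: "fsize (inst \<phi> t) = fsize \<phi>"
  by (simp add: inst_def)

text \<open>Strong Kleene satisfaction (intended for sentences); quantifiers via numeral instances.\<close>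
function sk :: "pmodel \<Rightarrow> fm \<Rightarrow> bool" where
  "sk M (Eq s t) = (val s = val t)"
| "sk M (Neq s t) = (val s \<noteq> val t)"
| "sk M (Tr t) = (val t \<in> Tp M)"
| "sk M (NTr t) = (val t \<in> Tn M)"
| "sk M (Pr t) = (val t \<in> Pp M)"
| "sk M (NPr t) = (val t \<in> Pn M)"
| "sk M (And a b) = (sk M a \<and> sk M b)"
| "sk M (Or a b) = (sk M a \<or> sk M b)"
| "sk M (All a) = (\<forall>n. sk M (inst a (num n)))"
| "sk M (Ex a) = (\<exists>n. sk M (inst a (num n)))"
  by pat_completeness auto
termination
  by (relation "measure (\<lambda>(M, \<phi>). fsize \<phi>)") auto

text \<open>SK-satisfaction in (N,T,P) of the L-sentence Paradox(code phi), for phi a sentence: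
  the disjunction of clauses (1)--(7).  The arithmetical parts are bivalent.\<close>
definition Psat :: "pmodel \<Rightarrow> fm \<Rightarrow> bool" where
  "Psat M \<phi> \<longleftrightarrow>
     (sentence \<phi> \<and> Pi_par \<phi>) \<or>
     (case \<phi> of
        Tr t \<Rightarrow> val t \<in> Pp M
      | NTr t \<Rightarrow> val t \<in> Pp M
      | And \<psi> \<theta> \<Rightarrow> (code \<psi> \<in> Pp M \<and> code \<theta> \<in> Pp M) \<or> (code \<psi> \<in> Tp M \<and> code \<theta> \<in> Pp M)
                      \<or> (code \<theta> \<in> Tp M \<and> code \<psi> \<in> Pp M)
      | Or \<psi> \<theta> \<Rightarrow> (code \<psi> \<in> Pp M \<and> code \<theta> \<in> Pp M) \<or> (code \<psi> \<in> Tn M \<and> code \<theta> \<in> Pp M)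
                      \<or> (code \<theta> \<in> Tn M \<and> code \<psi> \<in> Pp M)
      | All \<psi> \<Rightarrow> (\<exists>y. code (inst \<psi> (num y)) \<in> Pp M)
                   \<and> (\<forall>y. code (inst \<psi> (num y)) \<in> Pp M \<or> code (inst \<psi> (num y)) \<in> Tp M)
      | Ex \<psi> \<Rightarrow> (\<exists>y. code (inst \<psi> (num y)) \<in> Pp M)
                   \<and> (\<forall>y. code (inst \<psi> (num y)) \<in> Pp M \<or> code (inst \<psi> (num y)) \<in> Tn M)
      | _ \<Rightarrow> False)"

definition P0minus :: "nat set" where
  "P0minus = {code (Pr (gn \<phi>)) | \<phi>. True}"

definition GammaTP :: "pmodel \<Rightarrow> pmodel" where
  "GammaTP M =
    (({code \<phi> | \<phi>. sentence \<phi> \<and> sk M \<phi>}, {code \<phi> | \<phi>. sentence \<phi> \<and> sk M (neg \<phi>)}),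
     ({code \<phi> | \<phi>. sentence \<phi> \<and> Psat M \<phi>},
      {code \<phi> | \<phi>. sentence \<phi> \<and> sk M (Or \<phi> (neg \<phi>))} \<union> P0minus))"

definition stage0 :: pmodel where
  "stage0 = (({}, {}), ({}, P0minus))"

text \<open>The transfinite sequence indexed by the elements of a well-ordered type:
  an element alpha stands for the ordinal of its initial segment {y. y < alpha}.\<close>
definition stage :: "'a::wellorder \<Rightarrow> pmodel" where
  "stage = wfrec {(x, y). x < y}
     (\<lambda>F x. if (\<forall>y. \<not> y < x) then stage0
            else if (\<exists>y. y < x \<and> (\<forall>z. z < x \<longrightarrow> z \<le> y))
              then GammaTP (F (THE y. y < x \<and> (\<forall>z. z < x \<longrightarrow> z \<le> y)))
            else ((\<Union>y\<in>{y. y < x}. Tp (F y), \<Union>y\<in>{y. y < x}. Tn (F y)),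
                  (\<Union>y\<in>{y. y < x}. Pp (F y), \<Union>y\<in>{y. y < x}. Pn (F y))))"

text \<open>The least fixed point (T_infty, P_infty) at which the sequence stabilizes.\<close>
definition stage_infty :: pmodel where
  "stage_infty = lfp GammaTP"

end

theory Submission
  imports Defs
begin

definition cons_env :: "nat \<Rightarrow> (nat \<Rightarrow> nat) \<Rightarrow> nat \<Rightarrow> nat" where
  "cons_env x e n = (case n of 0 \<Rightarrow> x | Suc m \<Rightarrow> e m)"

primrec ev :: "nat set \<Rightarrow> nat set \<Rightarrow> (nat \<Rightarrow> nat) \<Rightarrow> fm \<Rightarrow> bool" where
  "ev T P e (Eq s t) = (evalt e s = evalt e t)"
| "ev T P e (Neq s t) = (evalt e s \<noteq> evalt e t)"
| "ev T P e (Tr t) = (evalt e t \<in> T)"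
| "ev T P e (NTr t) = (evalt e t \<notin> T)"
| "ev T P e (Pr t) = (evalt e t \<in> P)"
| "ev T P e (NPr t) = (evalt e t \<notin> P)"
| "ev T P e (And a b) = (ev T P e a \<and> ev T P e b)"
| "ev T P e (Or a b) = (ev T P e a \<or> ev T P e b)"
| "ev T P e (All a) = (\<forall>x. ev T P (cons_env x e) a)"
| "ev T P e (Ex a) = (\<exists>x. ev T P (cons_env x e) a)"

lemma evalt_subst: "evalt e (substt \<sigma> t) = evalt (\<lambda>n. evalt e (\<sigma> n)) t"
  by (induction t) auto

lemma ev_neg: "ev T P e (neg \<phi>) = (\<not> ev T P e \<phi>)"
  by (induction \<phi> arbitrary: e) auto

lemma env_up: "(\<lambda>n. evalt (cons_env x e) (up \<sigma> n)) = cons_env x (\<lambda>n. evalt e (\<sigma> n))"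
  by (rule ext) (auto simp: up_def cons_env_def liftt_def evalt_subst split: nat.splits)

lemma ev_subst: "ev T P e (substf \<sigma> \<phi>) = ev T P (\<lambda>n. evalt e (\<sigma> n)) \<phi>"
  by (induction \<phi> arbitrary: e \<sigma>) (auto simp: evalt_subst env_up)

lemma ev_liftf: "ev T P e (liftf \<phi>) = ev T P (\<lambda>n. e (Suc n)) \<phi>"
  by (simp add: liftf_def ev_subst)

lemma ev_liftf_cons: "ev T P (cons_env x e) (liftf \<phi>) = ev T P e \<phi>"
  by (simp add: ev_liftf cons_env_def)

lemma env_inst: "(\<lambda>n. evalt e (case n of 0 \<Rightarrow> t | Suc m \<Rightarrow> Var m)) = cons_env (evalt e t) e"
  by (rule ext) (auto simp: cons_env_def split: nat.splits)

lemma ev_inst: "ev T P e (inst \<phi> t) = ev T P (cons_env (evalt e t) e) \<phi>"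
  by (simp add: inst_def ev_subst env_inst)

lemma env_succ: "(\<lambda>n. evalt (cons_env x e) (if n = 0 then Sc (Var 0) else Var n)) = cons_env (Suc x) e"
  by (rule ext) (auto simp: cons_env_def split: nat.splits)

lemma ev_succ: "ev T P (cons_env x e) (succ_inst \<phi>) = ev T P (cons_env (Suc x) e) \<phi>"
  by (simp add: succ_inst_def ev_subst env_succ)

lemma soundness:
  assumes "pask \<Gamma> \<Delta>"
  shows "\<forall>e. (\<forall>g\<in>\<Gamma>. ev T P e g) \<longrightarrow> (\<exists>d\<in>\<Delta>. ev T P e d)"
  using assms
proof (induction rule: pask.induct)
  case (weak \<Gamma> \<Delta> \<Gamma>' \<Delta>')
  then show ?case by blast
next
  case (allR \<Gamma> \<phi> \<Delta>)
  show ?case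
  proof (intro allI impI)
    fix e assume G: "\<forall>g\<in>\<Gamma>. ev T P e g"
    show "\<exists>d\<in>insert (All \<phi>) \<Delta>. ev T P e d"
    proof (cases "\<exists>d\<in>\<Delta>. ev T P e d")
      case False
      have "ev T P (cons_env x e) \<phi>" for x
      proof -
        have H: "\<forall>g\<in>liftf ` \<Gamma>. ev T P (cons_env x e) g" using G by (auto simp: ev_liftf_cons)
        obtain d where "d \<in> insert \<phi> (liftf ` \<Delta>)" "ev T P (cons_env x e) d"
          using allR.IH H by blast
        then show ?thesis using False by (auto simp: ev_liftf_cons)
      qed
      then show ?thesis by simp
    qed auto
  qed
next
  case (exL \<phi> \<Gamma> \<Delta>)
  show ?case
  proof (intro allI impI)
    fix e assume G: "\<forall>g\<in>insert (Ex \<phi>) \<Gamma>. ev T P e g"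
    then obtain x where x: "ev T P (cons_env x e) \<phi>" by auto
    show "\<exists>d\<in>\<Delta>. ev T P e d"
    proof -
      have H: "\<forall>g\<in>insert \<phi> (liftf ` \<Gamma>). ev T P (cons_env x e) g" using G x by (auto simp: ev_liftf_cons)
      obtain d where "d \<in> liftf ` \<Delta>" "ev T P (cons_env x e) d"
        using exL.IH H by blast
      then show ?thesis by (auto simp: ev_liftf_cons)
    qed
  qed
next
  case (ind \<phi> \<Gamma> \<Delta> t)
  show ?case
  proof (intro allI impI)
    fix e assume G: "\<forall>g\<in>insert (inst \<phi> Zero) \<Gamma>. ev T P e g"
    show "\<exists>d\<in>insert (inst \<phi> t) \<Delta>. ev T P e d"
    proof (cases "\<exists>d\<in>\<Delta>. ev T P e d")
      case False
      have "ev T P (cons_env n e) \<phi>" for n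
      proof (induction n)
        case 0 then show ?case using G by (simp add: ev_inst)
      next
        case (Suc n)
        have H: "\<forall>g\<in>insert \<phi> (liftf ` \<Gamma>). ev T P (cons_env n e) g"
          using G Suc by (auto simp: ev_liftf_cons)
        obtain d where "d \<in> insert (succ_inst \<phi>) (liftf ` \<Delta>)" "ev T P (cons_env n e) d"
          using ind.IH H by blast
        then show ?case using False by (auto simp: ev_liftf_cons ev_succ)
      qed
      then show ?thesis by (simp add: ev_inst)
    qed auto
  qed
next
  case (repl \<Gamma> \<phi> t \<Delta> s)
  then show ?case by (fastforce simp: ev_inst)
qed (auto simp: ev_neg ev_inst)

lemma val_num: "val (num n) = n"
  by (induction n) (auto simp: val_def)

lemma val_gn: "val (gn \<phi>) = code \<phi>"
  by (simp add: gn_def val_num)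

lemma not_bp_Pr: "\<not> base_paradoxical (Pr s)"
proof
  assume "base_paradoxical (Pr s)"
  then have "pask {Pr s} {NTr (gn (Pr s))}" by (simp add: base_paradoxical_def)
  from soundness[OF this, of UNIV UNIV] show False by simp
qed

lemma not_bp_NPr: "\<not> base_paradoxical (NPr s)"
proof
  assume "base_paradoxical (NPr s)"
  then have "pask {NPr s} {NTr (gn (NPr s))}" by (simp add: base_paradoxical_def)
  from soundness[OF this, of UNIV "{}"] show False by simp
qed

lemma not_Pi_Pr: "\<not> Pi_par (Pr s)" "\<not> Pi_par (NPr s)"
  by (auto simp: Pi_par_def not_bp_Pr not_bp_NPr)

definition bad :: "nat set" where
  "bad = {code (Pr s) | s. True} \<union> {code (NPr s) | s. True}"

lemma code_4: "code \<phi> = prod_encode (4, x) \<Longrightarrow> \<exists>s. \<phi> = Pr s"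
  by (cases \<phi>) (auto simp: prod_encode_eq)

lemma code_5: "code \<phi> = prod_encode (5, x) \<Longrightarrow> \<exists>s. \<phi> = NPr s"
  by (cases \<phi>) (auto simp: prod_encode_eq)

lemma Gamma_bad: "Pp (GammaTP M) \<inter> bad = {}"
proof -
  have "False" if "sentence \<phi>" "Psat M \<phi>" "code \<phi> \<in> bad" for \<phi>
  proof -
    from that(3) have "\<exists>s. \<phi> = Pr s \<or> \<phi> = NPr s"
      unfolding bad_def using code_4 code_5 by fastforce
    then obtain s where "\<phi> = Pr s \<or> \<phi> = NPr s" by blast
    then show False using that(2) not_Pi_Pr by (auto simp: Psat_def)
  qed
  then show ?thesis by (auto simp: GammaTP_def Pp_def)
qed

lemma stage_unfold:
  "stage x = (if (\<forall>y. \<not> y < x) then stage0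
            else if (\<exists>y. y < x \<and> (\<forall>z. z < x \<longrightarrow> z \<le> y))
              then GammaTP (stage (THE y. y < x \<and> (\<forall>z. z < x \<longrightarrow> z \<le> y)))
            else ((\<Union>y\<in>{y. y < x}. Tp (stage y), \<Union>y\<in>{y. y < x}. Tn (stage y)),
                  (\<Union>y\<in>{y. y < x}. Pp (stage y), \<Union>y\<in>{y. y < x}. Pn (stage y))))"
  (is "_ = ?R")
proof -
  have "stage x = (\<lambda>F x. if (\<forall>y. \<not> y < x) then stage0
            else if (\<exists>y. y < x \<and> (\<forall>z. z < x \<longrightarrow> z \<le> y))
              then GammaTP (F (THE y. y < x \<and> (\<forall>z. z < x \<longrightarrow> z \<le> y)))
            else ((\<Union>y\<in>{y. y < x}. Tp (F y), \<Union>y\<in>{y. y < x}. Tn (F y)),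
                  (\<Union>y\<in>{y. y < x}. Pp (F y), \<Union>y\<in>{y. y < x}. Pn (F y))))
        (cut stage {(x, y). x < y} x) x"
    unfolding stage_def by (rule wfrec[OF wf])
  also have "\<dots> = ?R"
  proof (cases "\<exists>y. y < x \<and> (\<forall>z. z < x \<longrightarrow> z \<le> y)")
    case True
    then obtain y where y: "y < x \<and> (\<forall>z. z < x \<longrightarrow> z \<le> y)" by blast
    have "(THE y. y < x \<and> (\<forall>z. z < x \<longrightarrow> z \<le> y)) = y"
      using y by (intro the_equality) (auto intro: order_antisym)
    then show ?thesis using y by (auto simp: cut_def)
  next
    case False
    then show ?thesis by (auto simp: cut_def)
  qed
  finally show ?thesis .
qed

lemma stage_bad: "Pp (stage (\<alpha>::'a::wellorder)) \<inter> bad = {}"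
proof (induction \<alpha> rule: less_induct)
  case (less x)
  show ?case
    by (subst stage_unfold) (use less Gamma_bad in \<open>auto simp: stage0_def Pp_def\<close>)
qed

theorem mainTheorem13:
  fixes \<alpha> :: "'a::wellorder" and t :: tm
  assumes "closed_term t"
  shows "\<not> sk (stage \<alpha>) (Or (Pr (gn (Pr t))) (Pr (gn (NPr t))))
         \<and> P0minus \<inter> Pp stage_infty = {}"
proof
  show "\<not> sk (stage \<alpha>) (Or (Pr (gn (Pr t))) (Pr (gn (NPr t))))"
    using stage_bad[of \<alpha>] by (auto simp: val_gn bad_def)
next
  define u :: pmodel where "u = ((UNIV, UNIV), (- bad, UNIV))"
  have "GammaTP u \<le> u"
    using Gamma_bad[of u] by (auto simp: u_def less_eq_prod_def Pp_def)
  then have "stage_infty \<le> u" unfolding stage_infty_def by (rule lfp_lowerbound)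
  then have "Pp stage_infty \<subseteq> - bad" by (auto simp: u_def less_eq_prod_def Pp_def)
  moreover have "P0minus \<subseteq> bad" by (auto simp: P0minus_def bad_def)
  ultimately show "P0minus \<inter> Pp stage_infty = {}" by blast
qed

end
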